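(* Let $M$ be a generic regular closed curve parameterized by $S^1\ni s\mapsto f(s)\in\mathbb{R}^2$, and let $C$ be a smooth branch of the Centre Symmetry Set of $M$ that connects two inflexion points $f(t_1)$ and $f(t_2)$ of $M$. Then the number of inflexion points of $M$ on the arc $f\big((t_1,t_2)\big)$ is even.
   Context: Generic: $f$ is regular with only transversal self-crossings, only non-degenerate inflexion points (curvature changes sign, $\det(f',f''')\ne0$), no undulation points, at least one point of each parallel pair is not an inflexion point, and further non-degeneracy conditions on parallel pairs hold. Distinct points of $M$ form a parallel pair if their tangent lines are parallel; $\mathrm{CSS}(M)$ is the envelope of lines through parallel pairs, locally parameterized near a parallel pair $a=f(s)$, $b=g(t(s))$ (local arc-length parameterizations with $f'(s)=-g'(t(s))$) by $\frac{\kappa_f(s)f(s)+\kappa_g(t(s))g(t(s))}{\kappa_f(s)+\kappa_g(t(s))}$; where the denominator vanishes the line is an asymptote. Maximal such smooth curves are smooth semi-branches; those sharing an asymptote are joined, giving smooth branches. A branch connects two inflexion points if at each of its two ends the generating parallel pairs converge (both points) to that inflexion point. $f((t_1,t_2))$ is the open arc from $f(t_1)$ to $f(t_2)$ following the orientation of $S^1$. *)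

theory Defs
  imports "HOL-Analysis.Analysis"
begin

text \<open>Plane curves are modelled as maps \<open>real \<Rightarrow> complex\<close> (the plane is \<open>\<complex> = \<real>\<^sup>2\<close>),
  closed curves parameterised by \<open>S\<^sup>1 = \<real>/2\<pi>\<int>\<close> as \<open>2\<pi>\<close>-periodic maps.\<close>

fun Dn :: "nat \<Rightarrow> (real \<Rightarrow> complex) \<Rightarrow> real \<Rightarrow> complex" where
  "Dn 0 f = f"
| "Dn (Suc n) f = (\<lambda>x. vector_derivative (Dn n f) (at x))"

definition cross :: "complex \<Rightarrow> complex \<Rightarrow> real" where
  "cross a b = Re a * Im b - Im a * Re b"

definition smooth_curve :: "(real \<Rightarrow> complex) \<Rightarrow> bool" where
  "smooth_curve f \<longleftrightarrow> (\<forall>n x. (Dn n f has_vector_derivative Dn (Suc n) f x) (at x))"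

definition closed_curve_2pi :: "(real \<Rightarrow> complex) \<Rightarrow> bool" where
  "closed_curve_2pi f \<longleftrightarrow> (\<forall>s. f (s + 2 * pi) = f s)"

definition regular_curve :: "(real \<Rightarrow> complex) \<Rightarrow> bool" where
  "regular_curve f \<longleftrightarrow> (\<forall>s. Dn 1 f s \<noteq> 0)"

definition same_param :: "real \<Rightarrow> real \<Rightarrow> bool" where
  "same_param s t \<longleftrightarrow> (\<exists>k::int. t = s + 2 * pi * of_int k)"

definition inflexion :: "(real \<Rightarrow> complex) \<Rightarrow> real \<Rightarrow> bool" where
  "inflexion f s \<longleftrightarrow> cross (Dn 1 f s) (Dn 2 f s) = 0"

definition undulation :: "(real \<Rightarrow> complex) \<Rightarrow> real \<Rightarrow> bool" where
  "undulation f s \<longleftrightarrow> inflexion f s \<and> cross (Dn 1 f s) (Dn 3 f s) = 0"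

definition parallel_pair :: "(real \<Rightarrow> complex) \<Rightarrow> real \<Rightarrow> real \<Rightarrow> bool" where
  "parallel_pair f s t \<longleftrightarrow> f s \<noteq> f t \<and> cross (Dn 1 f s) (Dn 1 f t) = 0"

definition generic_curve :: "(real \<Rightarrow> complex) \<Rightarrow> bool" where
  "generic_curve f \<longleftrightarrow>
     smooth_curve f \<and> closed_curve_2pi f \<and> regular_curve f \<and>
     (\<forall>s t. \<not> same_param s t \<and> f s = f t \<longrightarrow> cross (Dn 1 f s) (Dn 1 f t) \<noteq> 0) \<and>
     (\<forall>s. inflexion f s \<longrightarrow> cross (Dn 1 f s) (Dn 3 f s) \<noteq> 0) \<and>
     (\<forall>s. \<not> undulation f s) \<and>
     (\<forall>s t. parallel_pair f s t \<longrightarrow> \<not> (inflexion f s \<and> inflexion f t))"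

text \<open>A smooth branch of the CSS, given by its generating family of parallel pairs
  \<open>u \<mapsto> (f(\<sigma> u), f(\<tau> u))\<close>, \<open>u \<in> (0,1)\<close> (a smooth regular curve in the space of parameter
  pairs; passing through asymptotes of the CSS is allowed), which connects the inflexion
  points \<open>f(t\<^sub>1)\<close> (at \<open>u \<rightarrow> 0\<close>) and \<open>f(t\<^sub>2)\<close> (at \<open>u \<rightarrow> 1\<close>): at each end both points of the
  generating pairs converge (on \<open>S\<^sup>1\<close>) to the respective inflexion point.\<close>
definition css_branch_connecting ::
  "(real \<Rightarrow> complex) \<Rightarrow> (real \<Rightarrow> real) \<Rightarrow> (real \<Rightarrow> real) \<Rightarrow> real \<Rightarrow> real \<Rightarrow> bool" where
  "css_branch_connecting f \<sigma> \<tau> t1 t2 \<longleftrightarrow>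
     \<sigma> C1_differentiable_on {0<..<1} \<and> \<tau> C1_differentiable_on {0<..<1} \<and>
     (\<forall>u\<in>{0<..<1}. vector_derivative \<sigma> (at u) \<noteq> 0 \<or> vector_derivative \<tau> (at u) \<noteq> 0) \<and>
     (\<forall>u\<in>{0<..<1}. parallel_pair f (\<sigma> u) (\<tau> u)) \<and>
     inflexion f t1 \<and> inflexion f t2 \<and>
     ((\<lambda>u. cis (\<sigma> u)) \<longlongrightarrow> cis t1) (at_right 0) \<and>
     ((\<lambda>u. cis (\<tau> u)) \<longlongrightarrow> cis t1) (at_right 0) \<and>
     ((\<lambda>u. cis (\<sigma> u)) \<longlongrightarrow> cis t2) (at_left 1) \<and>
     ((\<lambda>u. cis (\<tau> u)) \<longlongrightarrow> cis t2) (at_left 1)"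

text \<open>parameters of the open arc \<open>f((t\<^sub>1,t\<^sub>2))\<close> from \<open>f(t\<^sub>1)\<close> to \<open>f(t\<^sub>2)\<close> following the orientation\<close>
definition arc_params :: "real \<Rightarrow> real \<Rightarrow> real set" where
  "arc_params t1 t2 =
     {s. t1 < s \<and> s < t1 + ((t2 - t1) - 2 * pi * of_int \<lfloor>(t2 - t1) / (2 * pi)\<rfloor>)}"

end

theory Submission
  imports Defs
begin


lemma cross_cnj: "cross a b = Im (cnj a * b)"
  by (simp add: cross_def)

lemma cross_deriv:
  assumes "(g has_vector_derivative g') (at x within S)"
      and "(h has_vector_derivative h') (at x within S)"
  shows "((\<lambda>x. cross (g x) (h x)) has_real_derivative (cross g' (h x) + cross (g x) h')) (at x within S)"
proof -
  have "((\<lambda>x. cnj (g x) * h x) has_vector_derivative (cnj (g x) * h' + cnj g' * h x)) (at x within S)"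
    by (intro derivative_intros assms)
  from bounded_linear.has_vector_derivative[OF bounded_linear_Im this]
  show ?thesis
    by (simp add: has_real_derivative_iff_has_vector_derivative cross_cnj algebra_simps)
qed

lemma cross_self[simp]: "cross a a = 0"
  by (simp add: cross_def)

lemma cross_scale_left: "cross (of_real c * a) b = c * cross a b"
  by (simp add: cross_def algebra_simps)
lemma cross_scale_right: "cross a (of_real c * b) = c * cross a b"
  by (simp add: cross_def algebra_simps)
lemma cross_antisym: "cross a b = - cross b a"
  by (simp add: cross_def algebra_simps)

lemma cross_zero_parallel:
  assumes "cross a b = 0" "a \<noteq> 0"
  shows "\<exists>c. b = of_real c * a"
proof -
  have "Im (cnj a * b) = 0" using assms by (simp add: cross_cnj)
  hence r: "cnj a * b = of_real (Re (cnj a * b))" by (simp add: complex_eq_iff)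
  have "cnj a \<noteq> 0" using assms(2) by simp
  hence "b = (cnj a * b) / (cnj a * a) * a" using assms(2) by simp
  also have "cnj a * a = of_real ((cmod a)^2)" by (metis complex_norm_square mult.commute of_real_power)
  finally have "b = of_real (Re (cnj a * b) / (cmod a)^2) * a"
    using assms(2) by (subst (asm) r) (simp add: field_simps)
  thus ?thesis by blast
qed

lemma Dn_shift:
  assumes sm: "smooth_curve f" and per: "\<And>x. f (x + c) = f x"
  shows "Dn n f (x + c) = Dn n f x"
proof (induction n arbitrary: x)
  case 0 thus ?case using per by simp
next
  case (Suc n)
  have eq: "Dn n f = (\<lambda>y. Dn n f (y + c))" using Suc by auto
  have d1: "((\<lambda>y. y + c) has_vector_derivative 1) (at x)"
    by (auto intro!: derivative_eq_intros simp: has_real_derivative_iff_has_vector_derivative[symmetric])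
  have "((Dn n f \<circ> (\<lambda>y. y + c)) has_vector_derivative (1 *\<^sub>R Dn (Suc n) f (x + c))) (at x)"
    by (rule vector_diff_chain_at[OF d1]) (use sm in \<open>simp add: smooth_curve_def\<close>)
  hence "(Dn n f has_vector_derivative Dn (Suc n) f (x + c)) (at x)"
    by (subst eq) (simp add: o_def)
  moreover have "(Dn n f has_vector_derivative Dn (Suc n) f x) (at x)"
    using sm by (simp add: smooth_curve_def)
  ultimately show ?case by (rule vector_derivative_unique_at)
qed

lemma periodic_int:
  assumes per: "\<And>x. g (x + 2 * pi) = g x"
  shows "g (x + 2 * pi * of_int k) = g x"
proof -
  have pn: "g (y + 2 * pi * of_nat n) = g y" for y n
  proof (induction n arbitrary: y)
    case 0 thus ?case by simp
  next
    case (Suc n)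
    have "g (y + 2 * pi * of_nat (Suc n)) = g ((y + 2 * pi * of_nat n) + 2 * pi)"
      by (simp add: algebra_simps)
    also have "\<dots> = g y" using per Suc by simp
    finally show ?case .
  qed
  show ?thesis
  proof (cases "k \<ge> 0")
    case True
    then obtain n where "k = int n" by (metis nonneg_eq_int)
    thus ?thesis using pn by simp
  next
    case False
    then obtain n where n: "k = - int n" by (metis int_cases2 linorder_le_cases nonpos_int_cases)
    have "g x = g ((x + 2 * pi * of_int k) + 2 * pi * of_nat n)"
      by (simp add: n)
    thus ?thesis using pn by simp
  qed
qed

definition dotp :: "complex \<Rightarrow> complex \<Rightarrow> real" where
  "dotp a b = Re (cnj a * b)"

lemma lagrange2: "cross v b * dotp v a - cross v a * dotp v b = (cmod v)^2 * cross a b"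
  unfolding cmod_power2 cross_def dotp_def by (simp add: algebra_simps power2_eq_square)

locale gc =
  fixes f :: "real \<Rightarrow> complex"
  assumes gen: "generic_curve f"
begin

lemma sm: "smooth_curve f" using gen by (simp add: generic_curve_def)

lemma der: "(Dn n f has_vector_derivative Dn (Suc n) f x) (at x within S)"
  using sm by (auto simp: smooth_curve_def intro: has_vector_derivative_at_within)

lemma der1: "(Dn 1 f has_vector_derivative Dn 2 f x) (at x within S)"
  using der[of 1] by (simp add: numeral_2_eq_2)
lemma der2: "(Dn 2 f has_vector_derivative Dn 3 f x) (at x within S)"
  using der[of 2] by (simp add: numeral_3_eq_3 numeral_2_eq_2)
lemma der0: "(f has_vector_derivative Dn 1 f x) (at x within S)"
  using der[of 0] by simp

lemma contDn: "isCont (Dn n f) x"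
  using der[of n x UNIV] has_vector_derivative_continuous by blast

lemma contDn_on: "continuous_on S (Dn n f)"
  using contDn by (simp add: continuous_at_imp_continuous_on)

lemma per: "Dn n f (x + 2 * pi * of_int k) = Dn n f x"
proof -
  have "Dn n f (y + 2 * pi) = Dn n f y" for y
    by (rule Dn_shift[OF sm]) (use gen in \<open>simp add: generic_curve_def closed_curve_2pi_def\<close>)
  thus ?thesis by (rule periodic_int)
qed

lemma per0: "f (x + 2 * pi * of_int k) = f x"
  using per[of 0] by simp

lemma reg: "Dn 1 f x \<noteq> 0"
  using gen by (simp add: generic_curve_def regular_curve_def)

definition K :: "real \<Rightarrow> real" where "K x = cross (Dn 1 f x) (Dn 2 f x)"
definition K' :: "real \<Rightarrow> real" where "K' x = cross (Dn 1 f x) (Dn 3 f x)"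

lemma K_deriv: "(K has_real_derivative K' x) (at x within S)"
proof -
  have "((\<lambda>x. cross (Dn 1 f x) (Dn 2 f x)) has_real_derivative
          (cross (Dn 2 f x) (Dn 2 f x) + cross (Dn 1 f x) (Dn 3 f x))) (at x within S)"
    by (rule cross_deriv[OF der1 der2])
  thus ?thesis by (simp add: K_def[abs_def] K'_def)
qed

lemma K'_cont: "isCont K' x"
  using contDn[where n=1 and x=x] contDn[where n=3 and x=x] unfolding isCont_def K'_def[abs_def] cross_def
  by (intro tendsto_intros) auto

lemma K_cont: "isCont K x"
  using K_deriv[of x UNIV] DERIV_isCont by blast

lemma K_per: "K (x + 2 * pi * of_int k) = K x"
  unfolding K_def per by (rule refl)
lemma K'_per: "K' (x + 2 * pi * of_int k) = K' x"
  unfolding K'_def per by (rule refl)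

lemma infl_iff: "inflexion f s \<longleftrightarrow> K s = 0"
  by (simp add: inflexion_def K_def)

lemma K'_nz: "K s = 0 \<Longrightarrow> K' s \<noteq> 0"
  using gen by (simp add: generic_curve_def inflexion_def K_def K'_def)

lemma not_both: "parallel_pair f a b \<Longrightarrow> K a = 0 \<Longrightarrow> K b = 0 \<Longrightarrow> False"
  using gen by (auto simp: generic_curve_def inflexion_def K_def)

definition phi :: "real \<Rightarrow> real \<Rightarrow> real" where
  "phi t s = cross (Dn 1 f t) (Dn 1 f s) / dotp (Dn 1 f t) (Dn 1 f s)"

lemma phi_deriv:
  assumes "dotp (Dn 1 f t) (Dn 1 f s) \<noteq> 0"
  shows "(phi t has_real_derivative
           (cmod (Dn 1 f t))^2 * K s / (dotp (Dn 1 f t) (Dn 1 f s))^2) (at s within S)"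
proof -
  define v where "v = Dn 1 f t"
  have c0: "((\<lambda>s. v) has_vector_derivative 0) (at s within S)" by (rule derivative_intros)
  have dc: "((\<lambda>s. cross v (Dn 1 f s)) has_real_derivative
           (cross 0 (Dn 1 f s) + cross v (Dn 2 f s))) (at s within S)"
    by (rule cross_deriv[OF c0 der1])
  have "((\<lambda>s. cnj v * Dn 1 f s) has_vector_derivative cnj v * Dn 2 f s) (at s within S)"
    by (intro derivative_intros der1)
  from bounded_linear.has_vector_derivative[OF bounded_linear_Re this]
  have dd: "((\<lambda>s. dotp v (Dn 1 f s)) has_real_derivative dotp v (Dn 2 f s)) (at s within S)"
    by (simp add: has_real_derivative_iff_has_vector_derivative dotp_def)
  have "((\<lambda>s. cross v (Dn 1 f s) / dotp v (Dn 1 f s)) has_real_derivative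
     ((cross 0 (Dn 1 f s) + cross v (Dn 2 f s)) * dotp v (Dn 1 f s) - cross v (Dn 1 f s) * dotp v (Dn 2 f s))
      / (dotp v (Dn 1 f s) * dotp v (Dn 1 f s))) (at s within S)"
    by (rule DERIV_divide[OF dc dd]) (use assms v_def in simp)
  moreover have "((cross 0 (Dn 1 f s) + cross v (Dn 2 f s)) * dotp v (Dn 1 f s) - cross v (Dn 1 f s) * dotp v (Dn 2 f s))
      / (dotp v (Dn 1 f s) * dotp v (Dn 1 f s)) = (cmod v)^2 * K s / (dotp v (Dn 1 f s))^2"
    using lagrange2[of v "Dn 2 f s" "Dn 1 f s"]
    by (simp add: cross_def[of 0] K_def power2_eq_square)
  ultimately show ?thesis by (simp add: phi_def[abs_def] v_def)
qed

lemma phi_per: "phi t (s + 2 * pi * of_int k) = phi t s"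
  unfolding phi_def per by (rule refl)

lemma sign_trans: "0 < (p::real) * q \<Longrightarrow> 0 < q * r \<Longrightarrow> 0 < p * r"
  by (auto simp: zero_less_mult_iff)

lemma cont_pos_nbhd:
  fixes t :: real
  assumes "isCont h t" "(0::real) < h t"
  shows "\<exists>d>0. \<forall>s. \<bar>s - t\<bar> < d \<longrightarrow> 0 < h s"
proof -
  have "eventually (\<lambda>s. 0 < h s) (at t)"
    using assms order_tendstoD(1) unfolding isCont_def by blast
  then obtain d where d: "d > 0" "\<And>s. s \<noteq> t \<Longrightarrow> dist s t < d \<Longrightarrow> 0 < h s"
    by (auto simp: eventually_at)
  show ?thesis
    using d assms(2) by (intro exI[of _ d]) (metis dist_real_def)
qed

lemma local_choice:
  assumes "K t = 0"
  shows "\<exists>d>0. d \<le> pi \<and> (\<forall>s. \<bar>s - t\<bar> < d \<longrightarrow> dotp (Dn 1 f t) (Dn 1 f s) > 0 \<and> K' s * K' t > 0)"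
proof -
  have c1: "isCont (\<lambda>s. dotp (Dn 1 f t) (Dn 1 f s)) t"
    using contDn[where n=1 and x=t] unfolding isCont_def dotp_def
    by (intro tendsto_intros) auto
  have p1: "0 < dotp (Dn 1 f t) (Dn 1 f t)"
    using reg[of t] by (simp add: dotp_def complex_mult_cnj[unfolded mult.commute[of _ "cnj _"]] sum_power2_gt_zero_iff complex_eq_iff)
  have c2: "isCont (\<lambda>s. K' s * K' t) t"
    by (intro continuous_intros K'_cont)
  have p2: "0 < K' t * K' t" using K'_nz[OF assms] by (simp add: zero_less_mult_iff linorder_neq_iff) blast
  obtain d1 where d1: "d1 > 0" "\<forall>s. \<bar>s - t\<bar> < d1 \<longrightarrow> 0 < dotp (Dn 1 f t) (Dn 1 f s)"
    using cont_pos_nbhd[OF c1 p1] by blast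
  obtain d2 where d2: "d2 > 0" "\<forall>s. \<bar>s - t\<bar> < d2 \<longrightarrow> 0 < K' s * K' t"
    using cont_pos_nbhd[OF c2 p2] by blast
  show ?thesis
    using d1 d2 pi_gt_zero by (intro exI[of _ "min (min d1 d2) pi"]) auto
qed

lemma dotp_scale_right: "dotp a (of_real c * b) = c * dotp a b"
  by (simp add: dotp_def algebra_simps)

lemma dotp_self_pos: "a \<noteq> 0 \<Longrightarrow> 0 < dotp a a"
  by (simp add: dotp_def complex_mult_cnj[unfolded mult.commute[of _ "cnj _"]] sum_power2_gt_zero_iff complex_eq_iff)

lemma phi_parallel:
  assumes "cross (Dn 1 f a) (Dn 1 f b) = 0"
  shows "phi t a = phi t b"
proof -
  obtain c where c: "Dn 1 f b = of_real c * Dn 1 f a"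
    using cross_zero_parallel[OF assms reg] by blast
  have "c \<noteq> 0" using reg[of b] c by auto
  thus ?thesis unfolding phi_def c cross_scale_right dotp_scale_right by simp
qed

context
  fixes t d :: real
  assumes Kt: "K t = 0" and dpos: "d > 0"
    and Hd: "\<forall>s. \<bar>s - t\<bar> < d \<longrightarrow> dotp (Dn 1 f t) (Dn 1 f s) > 0 \<and> K' s * K' t > 0"
begin

lemma K_side:
  assumes "\<bar>s - t\<bar> < d" "s \<noteq> t"
  shows "0 < K s * K' t * (s - t)"
proof -
  obtain z where z: "\<bar>z - t\<bar> < d" "K s = (s - t) * K' z"
  proof (cases "s > t")
    case True
    obtain z where z: "t < z" "z < s" "K s - K t = (s - t) * K' z"
      using MVT2[of t s K K'] K_deriv True by blast
    show ?thesis by (rule that[of z]) (use z assms Kt in auto)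
  next
    case False
    hence st: "s < t" using assms by simp
    obtain z where z: "s < z" "z < t" "K t - K s = (t - s) * K' z"
      using MVT2[of s t K K'] K_deriv st by blast
    show ?thesis by (rule that[of z]) (use z assms Kt in \<open>auto simp: algebra_simps\<close>)
  qed
  have p: "0 < K' z * K' t" using Hd z by auto
  have eq: "K s * K' t * (s - t) = (s - t)^2 * (K' z * K' t)"
    unfolding z(2) by (simp add: power2_eq_square algebra_simps)
  have "0 < (s - t)^2" using assms by simp
  thus ?thesis unfolding eq using p by simp
qed

lemma K_nz: "\<bar>s - t\<bar> < d \<Longrightarrow> s \<noteq> t \<Longrightarrow> K s \<noteq> 0"
  using K_side by fastforce

lemma phi_deriv_ball:
  assumes "\<bar>x - t\<bar> < d"
  shows "(phi t has_real_derivative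
           (cmod (Dn 1 f t))^2 * K x / (dotp (Dn 1 f t) (Dn 1 f x))^2) (at x)"
  using Hd assms by (intro phi_deriv) auto

lemma straddle:
  assumes "a < b" "\<bar>a - t\<bar> < d" "\<bar>b - t\<bar> < d" "phi t a = phi t b"
  shows "a < t \<and> t < b"
proof -
  have "\<And>x. a \<le> x \<Longrightarrow> x \<le> b \<Longrightarrow> (phi t has_real_derivative
           (cmod (Dn 1 f t))^2 * K x / (dotp (Dn 1 f t) (Dn 1 f x))^2) (at x)"
    using assms by (intro phi_deriv_ball) auto
  then obtain z where z: "a < z" "z < b"
     "phi t b - phi t a = (b - a) * ((cmod (Dn 1 f t))^2 * K z / (dotp (Dn 1 f t) (Dn 1 f z))^2)"
    using MVT2[OF assms(1), where f="phi t" and f'="\<lambda>x. (cmod (Dn 1 f t))^2 * K x / (dotp (Dn 1 f t) (Dn 1 f x))^2"] by blast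
  have zd: "\<bar>z - t\<bar> < d" using z assms by auto
  have "dotp (Dn 1 f t) (Dn 1 f z) > 0" using Hd zd by auto
  moreover have "cmod (Dn 1 f t) > 0" using reg by simp
  ultimately have "K z = 0" using z assms by simp
  hence "z = t" using K_nz zd by blast
  thus ?thesis using z by simp
qed

lemma opp_sides:
  assumes "\<bar>a - t\<bar> < d" "\<bar>b - t\<bar> < d" "a \<noteq> b" "cross (Dn 1 f a) (Dn 1 f b) = 0"
  shows "(a - t) * (b - t) < 0"
proof -
  have e: "phi t a = phi t b" by (rule phi_parallel[OF assms(4)])
  show ?thesis
  proof (cases "a < b")
    case True
    then show ?thesis using straddle[OF True assms(1,2) e] by (simp add: mult_less_0_iff)
  next
    case False
    hence "b < a" using assms(3) by simp
    then show ?thesis using straddle[OF _ assms(2,1) e[symmetric]] by (simp add: mult_less_0_iff)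
  qed
qed

lemma phi_side:
  assumes "\<bar>s - t\<bar> < d" "s \<noteq> t"
  shows "0 < (phi t s - phi t t) * K' t"
proof -
  define c where "c = (cmod (Dn 1 f t))^2"
  have c: "c > 0" using reg by (simp add: c_def)
  show ?thesis
  proof (cases "s > t")
    case True
    have "\<And>x. t \<le> x \<Longrightarrow> x \<le> s \<Longrightarrow> (phi t has_real_derivative
           c * K x / (dotp (Dn 1 f t) (Dn 1 f x))^2) (at x)"
      using assms unfolding c_def by (intro phi_deriv_ball) auto
    then obtain z where z: "t < z" "z < s"
       "phi t s - phi t t = (s - t) * (c * K z / (dotp (Dn 1 f t) (Dn 1 f z))^2)"
      using MVT2[OF True, where f="phi t" and f'="\<lambda>x. c * K x / (dotp (Dn 1 f t) (Dn 1 f x))^2"] by blast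
    have zd: "\<bar>z - t\<bar> < d" using z assms by auto
    have dz: "dotp (Dn 1 f t) (Dn 1 f z) > 0" using Hd zd by auto
    have "0 < K z * K' t * (z - t)" using K_side[OF zd] z by simp
    hence kz: "0 < K z * K' t" using z by (simp add: zero_less_mult_iff)
    have "(phi t s - phi t t) * K' t = (s - t) * (c / (dotp (Dn 1 f t) (Dn 1 f z))^2) * (K z * K' t)"
      using z(3) by simp
    also have "\<dots> > 0" using True c dz kz by simp
    finally show ?thesis .
  next
    case False
    hence st: "s < t" using assms by simp
    have "\<And>x. s \<le> x \<Longrightarrow> x \<le> t \<Longrightarrow> (phi t has_real_derivative
           c * K x / (dotp (Dn 1 f t) (Dn 1 f x))^2) (at x)"
      using assms unfolding c_def by (intro phi_deriv_ball) auto
    then obtain z where z: "s < z" "z < t"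
       "phi t t - phi t s = (t - s) * (c * K z / (dotp (Dn 1 f t) (Dn 1 f z))^2)"
      using MVT2[OF st, where f="phi t" and f'="\<lambda>x. c * K x / (dotp (Dn 1 f t) (Dn 1 f x))^2"] by blast
    have zd: "\<bar>z - t\<bar> < d" using z assms by auto
    have dz: "dotp (Dn 1 f t) (Dn 1 f z) > 0" using Hd zd by auto
    have "0 < K z * K' t * (z - t)" using K_side[OF zd] z by simp
    hence kz: "K z * K' t < 0" using z by (simp add: zero_less_mult_iff)
    have e1: "phi t s - phi t t = - ((t - s) * (c * K z / (dotp (Dn 1 f t) (Dn 1 f z))^2))"
      using z(3) by linarith
    have "(phi t s - phi t t) * K' t = (t - s) * (c / (dotp (Dn 1 f t) (Dn 1 f z))^2) * (- (K z * K' t))"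
      unfolding e1 using dz by (simp add: field_simps)
    also have "\<dots> > 0" by (intro mult_pos_pos divide_pos_pos) (use st c dz kz in auto)
    finally show ?thesis .
  qed
qed

end

end




lemma cis_close:
  assumes "0 < d" "d \<le> pi"
  shows "\<exists>e>0. \<forall>a. cmod (cis a - cis t) < e \<longrightarrow> (\<exists>k::int. \<bar>a - 2 * pi * of_int k - t\<bar> < d)"
proof -
  define e where "e = sqrt (2 - 2 * cos d)"
  have "cos d < cos 0" using assms by (intro cos_monotone_0_pi) auto
  hence e: "e > 0" by (simp add: e_def)
  have "\<exists>k::int. \<bar>a - 2 * pi * of_int k - t\<bar> < d" if a: "cmod (cis a - cis t) < e" for a
  proof -
    define k where "k = \<lfloor>(a - t + pi) / (2 * pi)\<rfloor>"
    define r where "r = a - 2 * pi * of_int k - t"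
    have k1: "of_int k \<le> (a - t + pi) / (2 * pi)" unfolding k_def by linarith
    have k2: "(a - t + pi) / (2 * pi) < of_int k + 1" unfolding k_def by linarith
    have r1: "- pi \<le> r" using k1 by (simp add: r_def field_simps)
    have r2: "r < pi" using k2 by (simp add: r_def field_simps)
    have "cis a = cis (t + r + 2 * pi * of_int k)" by (simp add: r_def)
    also have "\<dots> = cis t * cis r * cis (2 * pi * of_int k)" by (simp only: cis_mult)
    also have "cis (2 * pi * of_int k) = 1" by simp
    finally have "cis a - cis t = cis t * (cis r - 1)" by (simp add: algebra_simps)
    hence "cmod (cis a - cis t) = cmod (cis r - 1)" by (simp add: norm_mult)
    also have "\<dots> = sqrt (2 - 2 * cos r)"
      unfolding cmod_def by (simp add: power2_eq_square algebra_simps sin_squared_eq[unfolded power2_eq_square])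
    finally have "sqrt (2 - 2 * cos r) < e" using a by simp
    hence "2 - 2 * cos r < 2 - 2 * cos d" unfolding e_def by simp
    hence cr: "cos d < cos \<bar>r\<bar>" by simp
    have "\<bar>r\<bar> < d"
    proof (rule ccontr)
      assume "\<not> \<bar>r\<bar> < d"
      hence "cos \<bar>r\<bar> \<le> cos d" using r1 r2 assms by (intro cos_monotone_0_pi_le) auto
      thus False using cr by simp
    qed
    thus ?thesis unfolding r_def by blast
  qed
  thus ?thesis using e by blast
qed

lemma periodic_tendsto:
  assumes per: "\<And>x k. h (x + 2 * pi * of_int k) = (h x :: real)"
    and cont: "isCont h t"
    and lim: "((\<lambda>u. cis (g u)) \<longlongrightarrow> cis t) F"
  shows "((\<lambda>u. h (g u)) \<longlongrightarrow> h t) F"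
proof (rule tendstoI)
  fix e :: real assume "e > 0"
  then obtain d0 where d0': "d0 > 0" "\<forall>s. s \<noteq> t \<and> dist s t < d0 \<longrightarrow> dist (h s) (h t) < e"
    using cont unfolding isCont_def tendsto_iff eventually_at by auto
  have d0: "d0 > 0" "\<And>s. dist s t < d0 \<Longrightarrow> dist (h s) (h t) < e"
    using d0' \<open>e > 0\<close> by (auto, metis dist_self)
  define d where "d = min d0 pi"
  have d: "0 < d" "d \<le> pi" using d0 by (auto simp: d_def)
  obtain ee where ee: "ee > 0" "\<And>a. cmod (cis a - cis t) < ee \<Longrightarrow> (\<exists>k::int. \<bar>a - 2 * pi * of_int k - t\<bar> < d)"
    using cis_close[OF d] by blast
  have "eventually (\<lambda>u. dist (cis (g u)) (cis t) < ee) F"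
    using lim ee(1) unfolding tendsto_iff by blast
  thus "eventually (\<lambda>u. dist (h (g u)) (h t) < e) F"
  proof (rule eventually_mono)
    fix u assume "dist (cis (g u)) (cis t) < ee"
    then obtain k :: int where k: "\<bar>g u - 2 * pi * of_int k - t\<bar> < d"
      using ee(2) by (auto simp: dist_norm)
    have "h (g u) = h ((g u - 2 * pi * of_int k) + 2 * pi * of_int k)" by simp
    also have "\<dots> = h (g u - 2 * pi * of_int k)" by (rule per)
    finally have "h (g u) = h (g u - 2 * pi * of_int k)" .
    moreover have "dist (g u - 2 * pi * of_int k) t < d0" using k by (simp add: dist_real_def d_def)
    ultimately show "dist (h (g u)) (h t) < e" using d0 by simp
  qed
qed




lemma C1_facts:
  assumes "g C1_differentiable_on {0<..<1::real}"
  shows "\<And>u. u \<in> {0<..<1} \<Longrightarrow> (g has_real_derivative vector_derivative g (at u)) (at u)"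
    and "continuous_on {0<..<1} (\<lambda>u. vector_derivative g (at u))"
proof -
  obtain D where D: "\<And>x. x \<in> {0<..<1::real} \<Longrightarrow> (g has_vector_derivative D x) (at x)"
    "continuous_on {0<..<1} D"
    using assms unfolding C1_differentiable_on_def by blast
  have e: "\<And>x. x \<in> {0<..<1::real} \<Longrightarrow> vector_derivative g (at x) = D x"
    using D(1) vector_derivative_at by blast
  show "\<And>u. u \<in> {0<..<1} \<Longrightarrow> (g has_real_derivative vector_derivative g (at u)) (at u)"
    using D(1) e by (simp add: has_real_derivative_iff_has_vector_derivative)
  show "continuous_on {0<..<1} (\<lambda>u. vector_derivative g (at u))"
    using D(2) e continuous_on_cong by (metis (no_types, lifting))
qed

lemma cross_scaleR_left: "cross (r *\<^sub>R a) b = r * cross a b"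
  by (simp add: scaleR_conv_of_real cross_scale_left)
lemma cross_scaleR_right: "cross a (r *\<^sub>R b) = r * cross a b"
  by (simp add: scaleR_conv_of_real cross_scale_right)

lemma pos_mult_neg: "0 < (x::real) * y \<Longrightarrow> y < 0 \<Longrightarrow> x < 0"
  by (auto simp: zero_less_mult_iff)

lemma neg_mult_pos: "(x::real) * y < 0 \<Longrightarrow> 0 < x \<Longrightarrow> y < 0"
  by (auto simp: mult_less_0_iff)

locale branch = gc +
  fixes \<sigma> \<tau> :: "real \<Rightarrow> real" and t1 t2 :: real
  assumes br: "css_branch_connecting f \<sigma> \<tau> t1 t2"
begin

definition sd where "sd u = vector_derivative \<sigma> (at u)"
definition td where "td u = vector_derivative \<tau> (at u)"
definition A where "A u = cross (Dn 2 f (\<sigma> u)) (Dn 1 f (\<tau> u))"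
definition B where "B u = cross (Dn 1 f (\<sigma> u)) (Dn 2 f (\<tau> u))"
definition Q where "Q u = A u * td u - B u * sd u"

lemma sd_der: "u \<in> {0<..<1} \<Longrightarrow> (\<sigma> has_real_derivative sd u) (at u)"
  using br C1_facts(1)[of \<sigma>] unfolding css_branch_connecting_def sd_def by blast
lemma td_der: "u \<in> {0<..<1} \<Longrightarrow> (\<tau> has_real_derivative td u) (at u)"
  using br C1_facts(1)[of \<tau>] unfolding css_branch_connecting_def td_def by blast
lemma sd_cont: "continuous_on {0<..<1} sd"
  using br C1_facts(2)[of \<sigma>] unfolding css_branch_connecting_def sd_def[abs_def] by blast
lemma td_cont: "continuous_on {0<..<1} td"
  using br C1_facts(2)[of \<tau>] unfolding css_branch_connecting_def td_def[abs_def] by blast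

lemma pp: "u \<in> {0<..<1} \<Longrightarrow> parallel_pair f (\<sigma> u) (\<tau> u)"
  using br unfolding css_branch_connecting_def by blast

lemma nz: "u \<in> {0<..<1} \<Longrightarrow> sd u \<noteq> 0 \<or> td u \<noteq> 0"
  using br unfolding css_branch_connecting_def sd_def td_def by blast

lemma F1:
  assumes u: "u \<in> {0<..<1}"
  shows "A u * sd u + B u * td u = 0"
proof -
  have c1: "((Dn 1 f \<circ> \<sigma>) has_vector_derivative (sd u *\<^sub>R Dn 2 f (\<sigma> u))) (at u)"
    by (rule vector_diff_chain_at[OF sd_der[OF u, unfolded has_real_derivative_iff_has_vector_derivative] der1])
  have c2: "((Dn 1 f \<circ> \<tau>) has_vector_derivative (td u *\<^sub>R Dn 2 f (\<tau> u))) (at u)"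
    by (rule vector_diff_chain_at[OF td_der[OF u, unfolded has_real_derivative_iff_has_vector_derivative] der1])
  have cd: "((\<lambda>x. cross ((Dn 1 f \<circ> \<sigma>) x) ((Dn 1 f \<circ> \<tau>) x)) has_real_derivative
        (cross (sd u *\<^sub>R Dn 2 f (\<sigma> u)) ((Dn 1 f \<circ> \<tau>) u) + cross ((Dn 1 f \<circ> \<sigma>) u) (td u *\<^sub>R Dn 2 f (\<tau> u)))) (at u)"
    by (rule cross_deriv[OF c1 c2])
  have "((\<lambda>x. 0) has_real_derivative
        (cross (sd u *\<^sub>R Dn 2 f (\<sigma> u)) ((Dn 1 f \<circ> \<tau>) u) + cross ((Dn 1 f \<circ> \<sigma>) u) (td u *\<^sub>R Dn 2 f (\<tau> u)))) (at u)"
    by (rule has_field_derivative_transform_within_open[OF cd _ u])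
       (use pp in \<open>auto simp: parallel_pair_def\<close>)
  moreover have "((\<lambda>x. 0) has_real_derivative 0) (at u)" by simp
  ultimately have "cross (sd u *\<^sub>R Dn 2 f (\<sigma> u)) ((Dn 1 f \<circ> \<tau>) u) + cross ((Dn 1 f \<circ> \<sigma>) u) (td u *\<^sub>R Dn 2 f (\<tau> u)) = 0"
    using DERIV_unique by blast
  thus ?thesis by (simp add: cross_scaleR_left cross_scaleR_right A_def B_def algebra_simps)
qed

lemma F2:
  assumes u: "u \<in> {0<..<1}"
  shows "Q u \<noteq> 0"
proof
  assume q: "Q u = 0"
  have f1: "A u * sd u + B u * td u = 0" by (rule F1[OF u])
  have "(A u ^ 2 + B u ^ 2) * sd u = A u * (A u * sd u + B u * td u) - B u * Q u"
    by (simp add: Q_def power2_eq_square algebra_simps)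
  hence e1: "(A u ^ 2 + B u ^ 2) * sd u = 0" using f1 q by simp
  have "(A u ^ 2 + B u ^ 2) * td u = B u * (A u * sd u + B u * td u) + A u * Q u"
    by (simp add: Q_def power2_eq_square algebra_simps)
  hence e2: "(A u ^ 2 + B u ^ 2) * td u = 0" using f1 q by simp
  have "A u ^ 2 + B u ^ 2 = 0" using e1 e2 nz[OF u] by auto
  hence AB: "A u = 0" "B u = 0" by (auto simp: sum_power2_eq_zero_iff)
  have par: "cross (Dn 1 f (\<sigma> u)) (Dn 1 f (\<tau> u)) = 0" using pp[OF u] by (simp add: parallel_pair_def)
  obtain c where c: "Dn 1 f (\<tau> u) = of_real c * Dn 1 f (\<sigma> u)"
    using cross_zero_parallel[OF par reg] by blast
  have c0: "c \<noteq> 0" using reg[of "\<tau> u"] c by auto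
  have "A u = - c * K (\<sigma> u)"
    unfolding A_def c cross_scale_right K_def by (subst cross_antisym) simp
  hence k1: "K (\<sigma> u) = 0" using AB c0 by simp
  have par2: "cross (Dn 1 f (\<tau> u)) (Dn 1 f (\<sigma> u)) = 0" using par cross_antisym by (metis neg_equal_0_iff_equal)
  obtain c' where c': "Dn 1 f (\<sigma> u) = of_real c' * Dn 1 f (\<tau> u)"
    using cross_zero_parallel[OF par2 reg] by blast
  have c0': "c' \<noteq> 0" using reg[of "\<sigma> u"] c' by auto
  have "B u = c' * K (\<tau> u)"
    unfolding B_def c' cross_scale_left K_def by simp
  hence k2: "K (\<tau> u) = 0" using AB c0' by simp
  show False using not_both[OF pp[OF u] k1 k2] .
qed

lemma sig_cont: "u \<in> {0<..<1} \<Longrightarrow> isCont \<sigma> u"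
  using sd_der DERIV_isCont by blast
lemma tau_cont: "u \<in> {0<..<1} \<Longrightarrow> isCont \<tau> u"
  using td_der DERIV_isCont by blast

lemma F3: "continuous_on {0<..<1} Q"
proof -
  have "isCont Q u" if u: "u \<in> {0<..<1}" for u
  proof -
    have s: "isCont sd u" "isCont td u"
      using sd_cont td_cont u by (simp_all add: continuous_on_eq_continuous_at[OF open_greaterThanLessThan])
    have g: "isCont (\<lambda>x. Dn n f (\<sigma> x)) u" "isCont (\<lambda>x. Dn n f (\<tau> x)) u" for n
      using isCont_o2[OF sig_cont[OF u] contDn] isCont_o2[OF tau_cont[OF u] contDn] by auto
    show ?thesis
      using g[of 1] g[of 2] s unfolding isCont_def Q_def[abs_def] A_def B_def cross_def
      by (intro tendsto_intros) auto
  qed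
  thus ?thesis by (simp add: continuous_at_imp_continuous_on)
qed

lemma Q_sign:
  assumes "u \<in> {0<..<1}" "v \<in> {0<..<1}"
  shows "0 < Q u * Q v"
proof (rule ccontr)
  assume "\<not> 0 < Q u * Q v"
  hence neg: "Q u * Q v < 0" using F2 assms by (auto simp: not_less le_less mult_eq_0_iff)
  define a where "a = min u v"
  define b where "b = max u v"
  have ab: "a \<le> b" "{a..b} \<subseteq> {0<..<1}" using assms by (auto simp: a_def b_def)
  have cab: "continuous_on {a..b} Q" using F3 ab(2) continuous_on_subset by blast
  have "Q a * Q b < 0" using neg by (cases "u \<le> v") (auto simp: a_def b_def mult.commute)
  hence "(Q a \<le> 0 \<and> 0 \<le> Q b) \<or> (Q b \<le> 0 \<and> 0 \<le> Q a)" by (auto simp: mult_less_0_iff)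
  then obtain x where "a \<le> x" "x \<le> b" "Q x = 0"
    using IVT'[of Q a 0 b, OF _ _ ab(1) cab] IVT2'[of Q b 0 a, OF _ _ ab(1) cab] by blast
  thus False using F2 ab(2) by auto
qed


lemma Qsd: "u \<in> {0<..<1} \<Longrightarrow> Q u * sd u = - B u * (sd u ^ 2 + td u ^ 2)"
proof -
  assume u: "u \<in> {0<..<1}"
  have "Q u * sd u = td u * (A u * sd u) - B u * sd u ^ 2" by (simp add: Q_def power2_eq_square algebra_simps)
  also have "A u * sd u = - B u * td u" using F1[OF u] by linarith
  finally show ?thesis by (simp add: power2_eq_square algebra_simps)
qed

lemma local_at:
  assumes Kt: "K t = 0" and dpos: "d > 0"
    and Hd: "\<forall>s. \<bar>s - t\<bar> < d \<longrightarrow> dotp (Dn 1 f t) (Dn 1 f s) > 0 \<and> K' s * K' t > 0"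
    and u: "u \<in> {0<..<1}"
    and ks: "\<bar>\<sigma> u - 2 * pi * of_int k - t\<bar> < d" and kt: "\<bar>\<tau> u - 2 * pi * of_int k' - t\<bar> < d"
  shows "0 < (phi t (\<sigma> u) - phi t t) * K' t"
    and "\<exists>W'. ((\<lambda>x. (phi t (\<sigma> x) - phi t t) * K' t) has_real_derivative W') (at u) \<and> 0 < Q u * W' * K' t"
proof -
  define a where "a = \<sigma> u - 2 * pi * of_int k"
  define b where "b = \<tau> u - 2 * pi * of_int k'"
  have sa: "\<sigma> u = a + 2 * pi * of_int k" by (simp add: a_def)
  have tb: "\<tau> u = b + 2 * pi * of_int k'" by (simp add: b_def)
  have ad: "\<bar>a - t\<bar> < d" and bd: "\<bar>b - t\<bar> < d" using ks kt by (auto simp: a_def b_def)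
  have ab: "a \<noteq> b"
  proof
    assume "a = b"
    hence "f (\<sigma> u) = f (\<tau> u)" unfolding sa tb per0 by simp
    thus False using pp[OF u] by (simp add: parallel_pair_def)
  qed
  have crab: "cross (Dn 1 f a) (Dn 1 f b) = 0"
    using pp[OF u] unfolding parallel_pair_def sa tb per by simp
  have opp: "(a - t) * (b - t) < 0" by (rule opp_sides[OF Kt dpos Hd ad bd ab crab])
  hence at: "a \<noteq> t" and bt: "b \<noteq> t" by auto
  have phs: "phi t (\<sigma> u) = phi t a" unfolding sa phi_per ..
  show "0 < (phi t (\<sigma> u) - phi t t) * K' t"
    unfolding phs by (rule phi_side[OF Kt dpos Hd ad at])
  have s1: "0 < K a * K' t * (a - t)" by (rule K_side[OF Kt dpos Hd ad at])
  have s2: "0 < K b * K' t * (b - t)" by (rule K_side[OF Kt dpos Hd bd bt])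
  have "0 < (K a * K' t * (a - t)) * (K b * K' t * (b - t))" using s1 s2 by simp
  also have "(K a * K' t * (a - t)) * (K b * K' t * (b - t)) = (K a * K b) * ((K' t)^2 * ((a - t) * (b - t)))"
    by (simp add: power2_eq_square algebra_simps)
  finally have "0 < (K a * K b) * ((K' t)^2 * ((a - t) * (b - t)))" .
  moreover have "(K' t)^2 * ((a - t) * (b - t)) < 0"
    using opp K'_nz[OF Kt] by (simp add: mult_pos_neg)
  ultimately have kab: "K a * K b < 0" by (rule pos_mult_neg)
  define v where "v = Dn 1 f t"
  have crba: "cross (Dn 1 f b) (Dn 1 f a) = 0" using crab cross_antisym by (metis neg_equal_0_iff_equal)
  obtain \<mu> where mu: "Dn 1 f a = of_real \<mu> * Dn 1 f b"
    using cross_zero_parallel[OF crba reg] by blast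
  have da: "dotp v (Dn 1 f a) > 0" and db: "dotp v (Dn 1 f b) > 0" using Hd ad bd by (auto simp: v_def)
  have "dotp v (Dn 1 f a) = \<mu> * dotp v (Dn 1 f b)" unfolding mu dotp_scale_right ..
  hence mupos: "\<mu> > 0" using da db by (simp add: zero_less_mult_iff)
  have Bmu: "B u = \<mu> * K b"
    unfolding B_def sa tb per mu cross_scale_left K_def ..
  have Ksa: "K (\<sigma> u) = K a" unfolding sa K_per ..
  have Dsa: "dotp v (Dn 1 f (\<sigma> u)) = dotp v (Dn 1 f a)" unfolding sa per ..
  define c where "c = (cmod v)^2"
  have cpos: "c > 0" using reg by (simp add: c_def v_def)
  have dphi: "(phi t has_real_derivative c * K a / (dotp v (Dn 1 f a))^2) (at (\<sigma> u))"
  proof -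
    have dne: "dotp (Dn 1 f t) (Dn 1 f (\<sigma> u)) \<noteq> 0" using da Dsa unfolding v_def by (metis less_irrefl)
    have "(phi t has_real_derivative (cmod (Dn 1 f t))^2 * K (\<sigma> u) / (dotp (Dn 1 f t) (Dn 1 f (\<sigma> u)))^2) (at (\<sigma> u))"
      by (rule phi_deriv[OF dne])
    thus ?thesis unfolding Ksa Dsa[unfolded v_def] c_def v_def .
  qed
  have "((phi t \<circ> \<sigma>) has_real_derivative (c * K a / (dotp v (Dn 1 f a))^2) * sd u) (at u)"
    by (rule DERIV_chain[OF dphi sd_der[OF u]])
  hence "((\<lambda>x. (phi t (\<sigma> x) - phi t t) * K' t) has_real_derivative
      ((c * K a / (dotp v (Dn 1 f a))^2) * sd u - 0) * K' t) (at u)"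
  proof -
    have h: "((\<lambda>x. phi t (\<sigma> x)) has_real_derivative (c * K a / (dotp v (Dn 1 f a))^2) * sd u) (at u)"
      using \<open>((phi t \<circ> \<sigma>) has_real_derivative _) _\<close> by (simp add: o_def)
    have "((\<lambda>x. (phi t (\<sigma> x) - phi t t) * K' t) has_real_derivative
      ((c * K a / (dotp v (Dn 1 f a))^2) * sd u - 0) * K' t) (at u)"
      by (intro DERIV_cmult_right DERIV_diff h DERIV_const)
    thus ?thesis .
  qed
  moreover have "0 < Q u * (((c * K a / (dotp v (Dn 1 f a))^2) * sd u - 0) * K' t) * K' t"
  proof -
    have "Q u * (((c * K a / (dotp v (Dn 1 f a))^2) * sd u - 0) * K' t) * K' t
       = (Q u * sd u) * (c / (dotp v (Dn 1 f a))^2) * K a * (K' t)^2"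
      by (simp add: power2_eq_square algebra_simps)
    also have "\<dots> = (\<mu> * (sd u ^ 2 + td u ^ 2) * (c / (dotp v (Dn 1 f a))^2) * (K' t)^2) * (- (K a * K b))"
      unfolding Qsd[OF u] Bmu by (simp add: algebra_simps)
    also have "\<dots> > 0"
    proof (intro mult_pos_pos)
      show "0 < sd u ^ 2 + td u ^ 2" using nz[OF u] by (simp add: sum_power2_gt_zero_iff)
      show "0 < c / (dotp v (Dn 1 f a))^2" using cpos da by simp
      show "0 < (K' t)^2" using K'_nz[OF Kt] by simp
      show "0 < - (K a * K b)" using kab by simp
    qed (rule mupos)
    finally show ?thesis .
  qed
  ultimately show "\<exists>W'. ((\<lambda>x. (phi t (\<sigma> x) - phi t t) * K' t) has_real_derivative W') (at u) \<and> 0 < Q u * W' * K' t"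
    by blast
qed


lemma infl_t1: "K t1 = 0" and infl_t2: "K t2 = 0"
  using br by (auto simp: css_branch_connecting_def infl_iff[symmetric])

lemma W_tendsto:
  assumes Kt: "K t = 0" and lim: "((\<lambda>u. cis (g u)) \<longlongrightarrow> cis t) F"
  shows "((\<lambda>x. (phi t (g x) - phi t t) * K' t) \<longlongrightarrow> 0) F"
proof -
  define h where "h s = (phi t s - phi t t) * K' t" for s
  have hp: "h (x + 2 * pi * of_int k) = h x" for x k by (simp add: h_def phi_per)
  have "dotp (Dn 1 f t) (Dn 1 f t) \<noteq> 0" using dotp_self_pos[OF reg] by (metis less_irrefl)
  hence "isCont (phi t) t" using phi_deriv DERIV_isCont by blast
  hence hc: "isCont h t" unfolding h_def[abs_def] by (intro continuous_intros)
  have "((\<lambda>u. h (g u)) \<longlongrightarrow> h t) F" by (rule periodic_tendsto[OF hp hc lim])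
  thus ?thesis by (simp add: h_def)
qed

lemma near_both:
  assumes Kt: "K t = 0" and d: "0 < d" "d \<le> pi"
    and l1: "((\<lambda>u. cis (\<sigma> u)) \<longlongrightarrow> cis t) F" and l2: "((\<lambda>u. cis (\<tau> u)) \<longlongrightarrow> cis t) F"
  shows "eventually (\<lambda>u. (\<exists>k::int. \<bar>\<sigma> u - 2 * pi * of_int k - t\<bar> < d) \<and> (\<exists>k::int. \<bar>\<tau> u - 2 * pi * of_int k - t\<bar> < d)) F"
proof -
  obtain e where e: "e > 0" "\<And>a. cmod (cis a - cis t) < e \<Longrightarrow> (\<exists>k::int. \<bar>a - 2 * pi * of_int k - t\<bar> < d)"
    using cis_close[OF d] by blast
  have "eventually (\<lambda>u. dist (cis (\<sigma> u)) (cis t) < e) F" using l1 e(1) unfolding tendsto_iff by blast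
  moreover have "eventually (\<lambda>u. dist (cis (\<tau> u)) (cis t) < e) F" using l2 e(1) unfolding tendsto_iff by blast
  ultimately show ?thesis
    by eventually_elim (use e(2) in \<open>auto simp: dist_norm\<close>)
qed

lemma end0: "\<exists>u\<in>{0<..<1}. 0 < Q u * K' t1"
proof -
  have Kt: "K t1 = 0" by (rule infl_t1)
  obtain d where d: "0 < d" "d \<le> pi"
    and Hd: "\<forall>s. \<bar>s - t1\<bar> < d \<longrightarrow> dotp (Dn 1 f t1) (Dn 1 f s) > 0 \<and> K' s * K' t1 > 0"
    using local_choice[OF Kt] by blast
  have l1: "((\<lambda>u. cis (\<sigma> u)) \<longlongrightarrow> cis t1) (at_right 0)"
   and l2: "((\<lambda>u. cis (\<tau> u)) \<longlongrightarrow> cis t1) (at_right 0)"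
    using br by (auto simp: css_branch_connecting_def)
  obtain b where b: "b > 0" "\<And>y. 0 < y \<Longrightarrow> y < b \<Longrightarrow>
      (\<exists>k::int. \<bar>\<sigma> y - 2 * pi * of_int k - t1\<bar> < d) \<and> (\<exists>k::int. \<bar>\<tau> y - 2 * pi * of_int k - t1\<bar> < d)"
    using near_both[OF Kt d l1 l2] unfolding eventually_at_right_field by auto
  define r where "r = min b 1"
  have r: "0 < r" "r \<le> 1" "r \<le> b" using b by (auto simp: r_def)
  define W where "W x = (phi t1 (\<sigma> x) - phi t1 t1) * K' t1" for x
  have loc: "0 < W y \<and> (\<exists>W'. (W has_real_derivative W') (at y) \<and> 0 < Q y * W' * K' t1)"
    if y: "0 < y" "y < r" for y
  proof -
    have y01: "y \<in> {0<..<1}" using y r by auto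
    obtain k k' :: int where k: "\<bar>\<sigma> y - 2 * pi * of_int k - t1\<bar> < d" "\<bar>\<tau> y - 2 * pi * of_int k' - t1\<bar> < d"
      using b(2)[of y] y r by auto
    show ?thesis using local_at[OF Kt d(1) Hd y01 k] unfolding W_def[abs_def] by blast
  qed
  define us where "us = r / 2"
  have us: "0 < us" "us < r" using r by (auto simp: us_def)
  have us01: "us \<in> {0<..<1}" using us r by auto
  have "0 < Q us * K' t1"
  proof (rule ccontr)
    assume "\<not> 0 < Q us * K' t1"
    hence neg: "Q us * K' t1 < 0" using F2[OF us01] K'_nz[OF Kt]
      by (simp add: not_less le_less mult_eq_0_iff)
    have dec: "\<exists>W'. (W has_real_derivative W') (at y) \<and> W' < 0" if y: "0 < y" "y < r" for y
    proof -
      obtain W' where W': "(W has_real_derivative W') (at y)" "0 < Q y * W' * K' t1" using loc[OF y] by blast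
      have y01: "y \<in> {0<..<1}" using y r by auto
      have "0 < Q y * Q us" by (rule Q_sign[OF y01 us01])
      have "0 < (Q y * W' * K' t1) * (Q y * Q us)" using W'(2) \<open>0 < Q y * Q us\<close> by simp
      also have "(Q y * W' * K' t1) * (Q y * Q us) = (W' * (Q y)^2) * (Q us * K' t1)"
        by (simp add: power2_eq_square algebra_simps)
      finally have "W' * (Q y)^2 < 0" using neg by (rule pos_mult_neg)
      hence "W' < 0" by (simp add: mult_less_0_iff)
      thus ?thesis using W'(1) by blast
    qed
    have "(W \<longlongrightarrow> 0) (at_right 0)" unfolding W_def[abs_def] by (rule W_tendsto[OF Kt l1])
    hence "eventually (\<lambda>x. W x < W us) (at_right 0)" using loc[OF us] by (intro order_tendstoD(2)) auto
    then obtain b2 where b2: "b2 > 0" "\<And>y. 0 < y \<Longrightarrow> y < b2 \<Longrightarrow> W y < W us"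
      unfolding eventually_at_right_field by auto
    define y where "y = min b2 us / 2"
    have y: "0 < y" "y < us" "y < b2" using b2 us by (auto simp: y_def)
    have "W us < W y"
      by (rule DERIV_neg_imp_decreasing[OF y(2)]) (use dec y us in \<open>auto\<close>)
    thus False using b2(2)[OF y(1) y(3)] by simp
  qed
  thus ?thesis using us01 by blast
qed

lemma end1: "\<exists>u\<in>{0<..<1}. Q u * K' t2 < 0"
proof -
  have Kt: "K t2 = 0" by (rule infl_t2)
  obtain d where d: "0 < d" "d \<le> pi"
    and Hd: "\<forall>s. \<bar>s - t2\<bar> < d \<longrightarrow> dotp (Dn 1 f t2) (Dn 1 f s) > 0 \<and> K' s * K' t2 > 0"
    using local_choice[OF Kt] by blast
  have l1: "((\<lambda>u. cis (\<sigma> u)) \<longlongrightarrow> cis t2) (at_left 1)"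
   and l2: "((\<lambda>u. cis (\<tau> u)) \<longlongrightarrow> cis t2) (at_left 1)"
    using br by (auto simp: css_branch_connecting_def)
  obtain b where b: "b < 1" "\<And>y. b < y \<Longrightarrow> y < 1 \<Longrightarrow>
      (\<exists>k::int. \<bar>\<sigma> y - 2 * pi * of_int k - t2\<bar> < d) \<and> (\<exists>k::int. \<bar>\<tau> y - 2 * pi * of_int k - t2\<bar> < d)"
    using near_both[OF Kt d l1 l2] unfolding eventually_at_left_field by auto
  define r where "r = max b 0"
  have r: "0 \<le> r" "r < 1" "b \<le> r" using b by (auto simp: r_def)
  define W where "W x = (phi t2 (\<sigma> x) - phi t2 t2) * K' t2" for x
  have loc: "0 < W y \<and> (\<exists>W'. (W has_real_derivative W') (at y) \<and> 0 < Q y * W' * K' t2)"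
    if y: "r < y" "y < 1" for y
  proof -
    have y01: "y \<in> {0<..<1}" using y r by auto
    obtain k k' :: int where k: "\<bar>\<sigma> y - 2 * pi * of_int k - t2\<bar> < d" "\<bar>\<tau> y - 2 * pi * of_int k' - t2\<bar> < d"
      using b(2)[of y] y r by auto
    show ?thesis using local_at[OF Kt d(1) Hd y01 k] unfolding W_def[abs_def] by blast
  qed
  define us where "us = (r + 1) / 2"
  have us: "r < us" "us < 1" using r by (auto simp: us_def)
  have us01: "us \<in> {0<..<1}" using us r by auto
  have "Q us * K' t2 < 0"
  proof (rule ccontr)
    assume "\<not> Q us * K' t2 < 0"
    hence pos: "0 < Q us * K' t2" using F2[OF us01] K'_nz[OF Kt]
      by (simp add: not_less le_less mult_eq_0_iff)
    have inc: "\<exists>W'. (W has_real_derivative W') (at y) \<and> W' > 0" if y: "r < y" "y < 1" for y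
    proof -
      obtain W' where W': "(W has_real_derivative W') (at y)" "0 < Q y * W' * K' t2" using loc[OF y] by blast
      have y01: "y \<in> {0<..<1}" using y r by auto
      have "0 < Q y * Q us" by (rule Q_sign[OF y01 us01])
      have "0 < (Q y * W' * K' t2) * (Q y * Q us)" using W'(2) \<open>0 < Q y * Q us\<close> by simp
      also have "(Q y * W' * K' t2) * (Q y * Q us) = (W' * (Q y)^2) * (Q us * K' t2)"
        by (simp add: power2_eq_square algebra_simps)
      finally have "0 < W' * (Q y)^2" using pos by (simp add: zero_less_mult_iff)
      hence "W' > 0" by (simp add: zero_less_mult_iff)
      thus ?thesis using W'(1) by blast
    qed
    have "(W \<longlongrightarrow> 0) (at_left 1)" unfolding W_def[abs_def] by (rule W_tendsto[OF Kt l1])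
    hence "eventually (\<lambda>x. W x < W us) (at_left 1)" using loc[OF us] by (intro order_tendstoD(2)) auto
    then obtain b2 where b2: "b2 < 1" "\<And>y. b2 < y \<Longrightarrow> y < 1 \<Longrightarrow> W y < W us"
      unfolding eventually_at_left_field by auto
    define y where "y = (max b2 us + 1) / 2"
    have y: "us < y" "y < 1" "b2 < y" using b2 us by (auto simp: y_def)
    have "W us < W y"
      by (rule DERIV_pos_imp_increasing[OF y(1)]) (use inc y us in \<open>auto\<close>)
    thus False using b2(2)[OF y(3) y(2)] by simp
  qed
  thus ?thesis using us01 by blast
qed

lemma Kprime_opp: "K' t1 * K' t2 < 0"
proof -
  obtain u where u: "u \<in> {0<..<1}" "0 < Q u * K' t1" using end0 by blast
  obtain v where v: "v \<in> {0<..<1}" "Q v * K' t2 < 0" using end1 by blast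
  have "0 < Q u * Q v" by (rule Q_sign[OF u(1) v(1)])
  have "(Q u * K' t1) * (Q v * K' t2) < 0" using u(2) v(2) by (simp add: mult_pos_neg)
  also have "(Q u * K' t1) * (Q v * K' t2) = (Q u * Q v) * (K' t1 * K' t2)" by (simp add: algebra_simps)
  finally have "(Q u * Q v) * (K' t1 * K' t2) < 0" .
  thus ?thesis using \<open>0 < Q u * Q v\<close> by (rule neg_mult_pos)
qed

end




lemma crossing:
  fixes g :: "real \<Rightarrow> real"
  assumes der: "DERIV g z :> l" and l: "l \<noteq> 0" and gz: "g z = 0"
  shows "\<exists>d>0. \<forall>h. 0 < h \<and> h < d \<longrightarrow> g (z - h) * g (z + h) < 0"
proof (cases "l > 0")
  case True
  obtain d1 where d1: "d1 > 0" "\<forall>h>0. h < d1 \<longrightarrow> g z < g (z + h)" using DERIV_pos_inc_right[OF der True] by blast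
  obtain d2 where d2: "d2 > 0" "\<forall>h>0. h < d2 \<longrightarrow> g (z - h) < g z" using DERIV_pos_inc_left[OF der True] by blast
  show ?thesis using d1 d2 gz by (intro exI[of _ "min d1 d2"]) (auto simp: mult_neg_pos)
next
  case False
  hence ln: "l < 0" using l by simp
  obtain d1 where d1: "d1 > 0" "\<forall>h>0. h < d1 \<longrightarrow> g z > g (z + h)" using DERIV_neg_dec_right[OF der ln] by blast
  obtain d2 where d2: "d2 > 0" "\<forall>h>0. h < d2 \<longrightarrow> g z < g (z - h)" using DERIV_neg_dec_left[OF der ln] by blast
  show ?thesis using d1 d2 gz by (intro exI[of _ "min d1 d2"]) (auto simp: mult_pos_neg)
qed

lemma no_zero_same_sign:
  fixes g :: "real \<Rightarrow> real"
  assumes "a \<le> b" "continuous_on {a..b} g" "\<And>x. a \<le> x \<Longrightarrow> x \<le> b \<Longrightarrow> g x \<noteq> 0"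
  shows "0 < g a * g b"
proof (rule ccontr)
  assume "\<not> 0 < g a * g b"
  hence "(g a \<le> 0 \<and> 0 \<le> g b) \<or> (g b \<le> 0 \<and> 0 \<le> g a)" by (auto simp: zero_less_mult_iff not_less)
  then obtain x where "a \<le> x" "x \<le> b" "g x = 0"
    using IVT'[of g a 0 b, OF _ _ assms(1,2)] IVT2'[of g b 0 a, OF _ _ assms(1,2)] by blast
  thus False using assms(3) by blast
qed

lemma neg_prod_iff: "(x::real) * y < 0 \<Longrightarrow> (0 < x \<longleftrightarrow> \<not> 0 < y)"
  by (auto simp: mult_less_0_iff)

lemma parity_gen:
  fixes g g' :: "real \<Rightarrow> real"
  assumes der: "\<And>x. DERIV g x :> g' x" and simple: "\<And>x. g x = 0 \<Longrightarrow> g' x \<noteq> 0"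
  shows "finite {x. a \<le> x \<and> x \<le> b \<and> g x = 0} \<Longrightarrow> card {x. a \<le> x \<and> x \<le> b \<and> g x = 0} = n \<Longrightarrow>
     a < b \<Longrightarrow> g a \<noteq> 0 \<Longrightarrow> g b \<noteq> 0 \<Longrightarrow> (0 < g a * g b \<longleftrightarrow> even n)"
proof (induction n arbitrary: a)
  have cont: "continuous_on S g" for S
    using der by (meson DERIV_isCont continuous_at_imp_continuous_on)
  {
  case 0
  hence "{x. a \<le> x \<and> x \<le> b \<and> g x = 0} = {}" by simp
  hence "0 < g a * g b" using no_zero_same_sign[of a b g] 0 cont by auto
  thus ?case by simp
  next
  case (Suc m)
  define Z where "Z = {x. a \<le> x \<and> x \<le> b \<and> g x = 0}"
  have fZ: "finite Z" and cZ: "card Z = Suc m" using Suc by (simp_all add: Z_def)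
  hence ne: "Z \<noteq> {}" by auto
  define z where "z = Min Z"
  have zZ: "z \<in> Z" using fZ ne by (simp add: z_def)
  have zmin: "\<And>x. x \<in> Z \<Longrightarrow> z \<le> x" using fZ by (simp add: z_def)
  have az: "a < z" "z < b" "g z = 0" using zZ Suc.prems by (auto simp: Z_def order.order_iff_strict)
  define Z' where "Z' = Z - {z}"
  have fZ': "finite Z'" using fZ by (simp add: Z'_def)
  define nx where "nx = (if Z' = {} then b else Min Z')"
  have nxz: "z < nx" "nx \<le> b"
  proof -
    show "z < nx"
    proof (cases "Z' = {}")
      case True thus ?thesis using az by (simp add: nx_def)
    next
      case False
      hence "nx \<in> Z'" using fZ' by (simp add: nx_def)
      thus ?thesis using zmin unfolding Z'_def by force
    qed
    show "nx \<le> b"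
    proof (cases "Z' = {}")
      case True thus ?thesis by (simp add: nx_def)
    next
      case False
      hence "nx \<in> Z'" using fZ' by (simp add: nx_def)
      thus ?thesis by (simp add: Z'_def Z_def)
    qed
  qed
  have nxmin: "\<And>x. x \<in> Z' \<Longrightarrow> nx \<le> x" using fZ' by (auto simp: nx_def)
  obtain d where d: "d > 0" "\<And>h. 0 < h \<Longrightarrow> h < d \<Longrightarrow> g (z - h) * g (z + h) < 0"
    using crossing[OF der simple[OF az(3)] az(3)] by blast
  define h where "h = min d (min (z - a) (nx - z)) / 2"
  have h: "0 < h" "h < d" "h < z - a" "h < nx - z" using d az nxz by (auto simp: h_def)
  define c where "c = z + h"
  have c: "z < c" "c < b" "c < nx" using h nxz by (auto simp: c_def)
  have "0 < g a * g (z - h)"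
  proof (rule no_zero_same_sign[OF _ cont])
    show "a \<le> z - h" using h by simp
    fix x assume x: "a \<le> x" "x \<le> z - h"
    show "g x \<noteq> 0"
    proof
      assume "g x = 0"
      hence "x \<in> Z" using x az h by (auto simp: Z_def)
      thus False using zmin[of x] x h by simp
    qed
  qed
  moreover have neg: "g (z - h) * g c < 0" using d(2)[OF h(1,2)] by (simp add: c_def)
  ultimately have gac: "g a * g c < 0"
    by (auto simp: zero_less_mult_iff mult_less_0_iff)
  have gc0: "g c \<noteq> 0" using gac by auto
  have Zc: "{x. c \<le> x \<and> x \<le> b \<and> g x = 0} = Z'"
  proof (intro set_eqI iffI)
    fix x assume "x \<in> {x. c \<le> x \<and> x \<le> b \<and> g x = 0}"
    thus "x \<in> Z'" using c az by (auto simp: Z'_def Z_def)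
  next
    fix x assume x: "x \<in> Z'"
    hence "nx \<le> x" by (rule nxmin)
    thus "x \<in> {x. c \<le> x \<and> x \<le> b \<and> g x = 0}" using x c by (auto simp: Z'_def Z_def)
  qed
  have cZ': "card Z' = m" using cZ zZ fZ by (simp add: Z'_def)
  have IH: "0 < g c * g b \<longleftrightarrow> even m"
    by (rule Suc.IH) (use Zc fZ' cZ' c gc0 Suc.prems in auto)
  have "0 < g a * g b \<longleftrightarrow> \<not> (0 < g c * g b)"
  proof -
    have e: "(g a * g b) * (g c * g b) = (g a * g c) * (g b)^2" by (simp add: power2_eq_square algebra_simps)
    have "(g b)^2 > 0" using Suc.prems by simp
    hence "(g a * g c) * (g b)^2 < 0" using gac by (simp add: mult_neg_pos)
    hence "(g a * g b) * (g c * g b) < 0" unfolding e .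
    thus ?thesis by (rule neg_prod_iff)
  qed
  thus ?case using IH by simp
  }
qed



lemma pos_mult_negh: "0 < (x::real) * (- h) \<Longrightarrow> 0 < h \<Longrightarrow> x < 0"
  by (auto simp: zero_less_mult_iff mult_less_0_iff)

theorem theorem4p17:
  fixes f :: "real \<Rightarrow> complex" and \<sigma> \<tau> :: "real \<Rightarrow> real" and t1 t2 :: real
  assumes "generic_curve f"
    and "css_branch_connecting f \<sigma> \<tau> t1 t2"
    and "\<not> same_param t1 t2"
  shows "even (card {s \<in> arc_params t1 t2. inflexion f s})"
proof -
  interpret branch f \<sigma> \<tau> t1 t2
    by unfold_locales (use assms in auto)
  define k where "k = \<lfloor>(t2 - t1) / (2 * pi)\<rfloor>"
  define L where "L = (t2 - t1) - 2 * pi * of_int k"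
  define T2 where "T2 = t1 + L"
  have L0: "0 \<le> L"
  proof -
    have "of_int k \<le> (t2 - t1) / (2 * pi)" unfolding k_def by linarith
    thus ?thesis unfolding L_def by (simp add: field_simps)
  qed
  have L2: "L < 2 * pi"
  proof -
    have "(t2 - t1) / (2 * pi) < of_int k + 1" unfolding k_def by linarith
    thus ?thesis unfolding L_def by (simp add: field_simps)
  qed
  have Lne: "L \<noteq> 0"
  proof
    assume "L = 0"
    hence "t2 = t1 + 2 * pi * of_int k" unfolding L_def by simp
    thus False using assms(3) unfolding same_param_def by blast
  qed
  have Lp: "0 < L" using L0 Lne by simp
  have T2e: "T2 = t2 + 2 * pi * of_int (- k)" by (simp add: T2_def L_def)
  have KT2: "K T2 = 0" unfolding T2e K_per by (rule infl_t2)
  have K'T2: "K' T2 = K' t2" unfolding T2e K'_per ..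
  have Kt1: "K t1 = 0" by (rule infl_t1)
  have S: "{s \<in> arc_params t1 t2. inflexion f s} = {s. t1 < s \<and> s < T2 \<and> K s = 0}"
    by (auto simp: arc_params_def T2_def L_def k_def infl_iff)
  show ?thesis
  proof (cases "finite {s. t1 < s \<and> s < T2 \<and> K s = 0}")
    case False
    thus ?thesis unfolding S by simp
  next
    case fin: True
    obtain d1 where d1: "0 < d1" "d1 \<le> pi"
      and Hd1: "\<forall>s. \<bar>s - t1\<bar> < d1 \<longrightarrow> dotp (Dn 1 f t1) (Dn 1 f s) > 0 \<and> K' s * K' t1 > 0"
      using local_choice[OF Kt1] by blast
    obtain d2 where d2: "0 < d2" "d2 \<le> pi"
      and Hd2: "\<forall>s. \<bar>s - T2\<bar> < d2 \<longrightarrow> dotp (Dn 1 f T2) (Dn 1 f s) > 0 \<and> K' s * K' T2 > 0"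
      using local_choice[OF KT2] by blast
    define h where "h = min (min d1 d2) (L / 2) / 2"
    have h: "0 < h" "h < d1" "h < d2" "h < L / 2" using d1 d2 Lp by (auto simp: h_def)
    define a where "a = t1 + h"
    define b where "b = T2 - h"
    have ab: "a < b" using h by (simp add: a_def b_def T2_def)
    have sa: "0 < K a * K' t1 * (a - t1)"
      by (rule K_side[OF Kt1 d1(1) Hd1]) (use h in \<open>auto simp: a_def\<close>)
    hence sa': "0 < K a * K' t1" using h by (simp add: a_def zero_less_mult_iff)
    have sb: "0 < K b * K' T2 * (b - T2)"
      by (rule K_side[OF KT2 d2(1) Hd2]) (use h in \<open>auto simp: b_def\<close>)
    hence "0 < (K b * K' T2) * (- h)" by (simp add: b_def)
    hence sb': "K b * K' T2 < 0" using h(1) by (rule pos_mult_negh)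
    have Z: "{x. a \<le> x \<and> x \<le> b \<and> K x = 0} = {s. t1 < s \<and> s < T2 \<and> K s = 0}"
    proof (intro set_eqI iffI)
      fix x assume "x \<in> {x. a \<le> x \<and> x \<le> b \<and> K x = 0}"
      thus "x \<in> {s. t1 < s \<and> s < T2 \<and> K s = 0}" using h by (auto simp: a_def b_def)
    next
      fix x assume x: "x \<in> {s. t1 < s \<and> s < T2 \<and> K s = 0}"
      have "a \<le> x"
      proof (rule ccontr)
        assume "\<not> a \<le> x"
        hence "\<bar>x - t1\<bar> < d1" "x \<noteq> t1" using x h by (auto simp: a_def)
        thus False using K_nz[OF Kt1 d1(1) Hd1] x by blast
      qed
      moreover have "x \<le> b"
      proof (rule ccontr)
        assume "\<not> x \<le> b"
        hence "\<bar>x - T2\<bar> < d2" "x \<noteq> T2" using x h by (auto simp: b_def)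
        thus False using K_nz[OF KT2 d2(1) Hd2] x by blast
      qed
      ultimately show "x \<in> {x. a \<le> x \<and> x \<le> b \<and> K x = 0}" using x by simp
    qed
    have opp: "K' t1 * K' T2 < 0" using Kprime_opp K'T2 by simp
    have "(K a * K' t1) * (K b * K' T2) < 0" using sa' sb' by (simp add: mult_pos_neg)
    also have "(K a * K' t1) * (K b * K' T2) = (K a * K b) * (K' t1 * K' T2)" by (simp add: algebra_simps)
    finally have "(K a * K b) * (K' t1 * K' T2) < 0" .
    hence kab: "0 < K a * K b" using opp by (simp add: mult_less_0_iff)
    have "0 < K a * K b \<longleftrightarrow> even (card {x. a \<le> x \<and> x \<le> b \<and> K x = 0})"
      by (rule parity_gen[of K K' a b]) (use K_deriv K'_nz fin Z ab sa' sb' in auto)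
    thus ?thesis using kab unfolding S Z[symmetric] by simp
  qed
qed

end
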